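(* Let $k\ge 3$, $\varepsilon\in[0,\tfrac12)$, and let $b^t=(b^t_0,\dots,b^t_{k-1})$ be the counterclockwise vertices of a convex polygon (consecutive collinear vertices allowed) with $\|b^t_j-b^t_{j+1}\|\le 1$ for all $j$ (indices mod $k$). Define $b^{t+1}=\Phi_\varepsilon(b^t)$ and $b^{t+2}=\Phi_\varepsilon(b^{t+1})$. Then for every $j$, every point $p$ lying in the quadrilateral with corners $b^t_j,b^t_{j+1},b^{t+1}_{j+1},b^{t+1}_j$ or in the quadrilateral with corners $b^{t+1}_j,b^{t+1}_{j+1},b^{t+2}_{j+1},b^{t+2}_j$ satisfies $\|p-b^t_j\|\le 1+\frac{\varepsilon^2}{2}$ and $\|p-b^t_{j+1}\|\le 1+\frac{\varepsilon^2}{2}$.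
   Context: The $\varepsilon$-GtM step is the map $\Phi_\varepsilon\colon(\mathbb{R}^2)^k\to(\mathbb{R}^2)^k$, $(b_0,\dots,b_{k-1})\mapsto(b_0^+,\dots,b_{k-1}^+)$ with $b_j^+=\varepsilon\frac{b_{j-1}+b_{j+1}}{2}+(1-\varepsilon)b_j$, indices modulo $k$. $\|\cdot\|$ is the Euclidean norm. "Lying in a quadrilateral" means lying in the closed region it bounds (in particular in the convex hull of its four corners). *)

theory Defs
  imports "HOL-Analysis.Analysis"
begin

text \<open>Points of the plane are vectors in real^2. A k-gon is a function
  b :: nat => real^2, of which only the values b 0, ..., b (k-1) matter;
  indices are taken modulo k.\<close>

definition cross2 :: "real^2 \<Rightarrow> real^2 \<Rightarrow> real" where
  "cross2 u v = u$1 * v$2 - u$2 * v$1"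

definition convex_polygon_ccw :: "nat \<Rightarrow> (nat \<Rightarrow> real^2) \<Rightarrow> bool" where
  "convex_polygon_ccw k b \<longleftrightarrow>
     inj_on b {..<k} \<and>
     (\<forall>j<k. \<forall>i<k. cross2 (b ((j+1) mod k) - b j) (b i - b j) \<ge> 0) \<and>
     (\<exists>j<k. \<exists>i<k. cross2 (b ((j+1) mod k) - b j) (b i - b j) > 0)"

definition gtm_step :: "real \<Rightarrow> nat \<Rightarrow> (nat \<Rightarrow> real^2) \<Rightarrow> (nat \<Rightarrow> real^2)" where
  "gtm_step \<epsilon> k b = (\<lambda>j. let i = j mod k in
     \<epsilon> *\<^sub>R ((1/2) *\<^sub>R (b ((i + k - 1) mod k) + b ((i + 1) mod k))) + (1 - \<epsilon>) *\<^sub>R b i)"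

end

theory Submission
  imports Defs
begin

lemma norm4:
  fixes u v w x :: "'a::real_normed_vector"
  assumes "norm u \<le> 1" "norm v \<le> 1" "norm w \<le> 1" "norm x \<le> 1"
  shows "norm (a *\<^sub>R u + b *\<^sub>R v + c *\<^sub>R w + d *\<^sub>R x) \<le> \<bar>a\<bar> + \<bar>b\<bar> + \<bar>c\<bar> + \<bar>d\<bar>"
proof -
  have "norm (a *\<^sub>R u + b *\<^sub>R v + c *\<^sub>R w + d *\<^sub>R x) \<le> norm (a *\<^sub>R u) + norm (b *\<^sub>R v) + norm (c *\<^sub>R w) + norm (d *\<^sub>R x)"
    by (smt (verit) norm_triangle_ineq)
  also have "\<dots> \<le> \<bar>a\<bar> + \<bar>b\<bar> + \<bar>c\<bar> + \<bar>d\<bar>"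
    using assms by (simp add: add_mono mult_left_le)
  finally show ?thesis .
qed

lemma sixpts:
  fixes p0 p1 p2 p3 p4 p5 q1 q2 q3 q4 r2 r3 :: "real^2" and \<epsilon> :: real
  assumes e: "0 \<le> \<epsilon>" "\<epsilon> < 1/2"
    and d: "norm (p1 - p0) \<le> 1" "norm (p2 - p1) \<le> 1" "norm (p3 - p2) \<le> 1"
      "norm (p4 - p3) \<le> 1" "norm (p5 - p4) \<le> 1"
  assumes q1: "q1 = \<epsilon> *\<^sub>R ((1/2) *\<^sub>R (p0 + p2)) + (1 - \<epsilon>) *\<^sub>R p1"
    and q2: "q2 = \<epsilon> *\<^sub>R ((1/2) *\<^sub>R (p1 + p3)) + (1 - \<epsilon>) *\<^sub>R p2"
    and q3: "q3 = \<epsilon> *\<^sub>R ((1/2) *\<^sub>R (p2 + p4)) + (1 - \<epsilon>) *\<^sub>R p3"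
    and q4: "q4 = \<epsilon> *\<^sub>R ((1/2) *\<^sub>R (p3 + p5)) + (1 - \<epsilon>) *\<^sub>R p4"
    and r2: "r2 = \<epsilon> *\<^sub>R ((1/2) *\<^sub>R (q1 + q3)) + (1 - \<epsilon>) *\<^sub>R q2"
    and r3: "r3 = \<epsilon> *\<^sub>R ((1/2) *\<^sub>R (q2 + q4)) + (1 - \<epsilon>) *\<^sub>R q3"
  shows "norm (p3 - p2) \<le> 1 + \<epsilon>^2/2" "norm (q2 - p2) \<le> 1 + \<epsilon>^2/2"
    "norm (q3 - p2) \<le> 1 + \<epsilon>^2/2"
    "norm (r2 - p2) \<le> 1 + \<epsilon>^2/2"
    "norm (r3 - p2) \<le> 1 + \<epsilon>^2/2"
proof -
  have M: "1 \<le> 1 + \<epsilon>^2/2" by simp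
  have sq: "0 \<le> \<epsilon>^2/2" by simp
  show "norm (p3 - p2) \<le> 1 + \<epsilon>^2/2" using d M by linarith
  have "q2 - p2 = (-\<epsilon>/2) *\<^sub>R (p2 - p1) + (\<epsilon>/2) *\<^sub>R (p3 - p2) + 0 *\<^sub>R (p4-p3) + 0 *\<^sub>R (p5-p4)"
    unfolding q2 by (simp add: vec_eq_iff forall_2; simp add: algebra_simps divide_simps)
  hence "norm (q2 - p2) \<le> \<bar>-\<epsilon>/2\<bar> + \<bar>\<epsilon>/2\<bar> + \<bar>0\<bar> + \<bar>0\<bar>"
    using norm4[OF d(2-5)] by metis
  moreover have "\<bar>-\<epsilon>/2\<bar> + \<bar>\<epsilon>/2\<bar> + \<bar>0\<bar> + \<bar>0::real\<bar> = \<epsilon>" using e by simp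
  ultimately show "norm (q2 - p2) \<le> 1 + \<epsilon>^2/2" using e sq by linarith
  have "q3 - p2 = 0 *\<^sub>R (p2 - p1) + (1-\<epsilon>/2) *\<^sub>R (p3 - p2) + (\<epsilon>/2) *\<^sub>R (p4-p3) + 0 *\<^sub>R (p5-p4)"
    unfolding q3 by (simp add: vec_eq_iff forall_2; simp add: algebra_simps divide_simps)
  hence "norm (q3 - p2) \<le> \<bar>0\<bar> + \<bar>1-\<epsilon>/2\<bar> + \<bar>\<epsilon>/2\<bar> + \<bar>0\<bar>"
    using norm4[OF d(2-5)] by metis
  moreover have "\<bar>0\<bar> + \<bar>1-\<epsilon>/2\<bar> + \<bar>\<epsilon>/2\<bar> + \<bar>0::real\<bar> = 1" using e by simp
  ultimately show "norm (q3 - p2) \<le> 1 + \<epsilon>^2/2" using e sq by linarith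
  have "\<epsilon> *\<^sub>R ((1/2) *\<^sub>R (q1 + q3)) + (1 - \<epsilon>) *\<^sub>R q2 - p2 =
     (-(\<epsilon>^2/4)) *\<^sub>R (p1 - p0) + (-(\<epsilon>^2/4) - \<epsilon>*(1-\<epsilon>)) *\<^sub>R (p2 - p1)
      + (\<epsilon>^2/4 + \<epsilon>*(1-\<epsilon>)) *\<^sub>R (p3 - p2) + (\<epsilon>^2/4) *\<^sub>R (p4-p3)"
    unfolding q1 q2 q3 by (simp add: vec_eq_iff forall_2 power2_eq_square; simp add: algebra_simps divide_simps)
  hence "norm (\<epsilon> *\<^sub>R ((1/2) *\<^sub>R (q1 + q3)) + (1 - \<epsilon>) *\<^sub>R q2 - p2) \<le>
     \<bar>-(\<epsilon>^2/4)\<bar> + \<bar>-(\<epsilon>^2/4) - \<epsilon>*(1-\<epsilon>)\<bar> + \<bar>\<epsilon>^2/4 + \<epsilon>*(1-\<epsilon>)\<bar> + \<bar>\<epsilon>^2/4\<bar>"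
    using norm4[OF d(1-4)] by metis
  moreover have "\<bar>-(\<epsilon>^2/4)\<bar> + \<bar>-(\<epsilon>^2/4) - \<epsilon>*(1-\<epsilon>)\<bar> + \<bar>\<epsilon>^2/4 + \<epsilon>*(1-\<epsilon>)\<bar> + \<bar>\<epsilon>^2/4\<bar> \<le> 1 + \<epsilon>^2/2"
  proof -
    have A: "\<epsilon>^2/4 \<ge> 0" by simp
    have B: "\<epsilon>*(1-\<epsilon>) \<ge> 0" using e by simp
    have "\<bar>-(\<epsilon>^2/4)\<bar> + \<bar>-(\<epsilon>^2/4) - \<epsilon>*(1-\<epsilon>)\<bar> + \<bar>\<epsilon>^2/4 + \<epsilon>*(1-\<epsilon>)\<bar> + \<bar>\<epsilon>^2/4\<bar>
       = 4*(\<epsilon>^2/4) + 2*(\<epsilon>*(1-\<epsilon>))" using A B by linarith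
    also have "\<dots> = 2*\<epsilon> - \<epsilon>^2" by (simp add: algebra_simps power2_eq_square)
    also have "\<dots> \<le> 1 + \<epsilon>^2/2" using e zero_le_power2[of \<epsilon>] by linarith
    finally show ?thesis .
  qed
  ultimately show "norm (r2 - p2) \<le> 1 + \<epsilon>^2/2" unfolding r2 by linarith
  have "\<epsilon> *\<^sub>R ((1/2) *\<^sub>R (q2 + q4)) + (1 - \<epsilon>) *\<^sub>R q3 - p2 =
     (-(\<epsilon>^2/4)) *\<^sub>R (p2 - p1) + (1-\<epsilon>+3*\<epsilon>^2/4) *\<^sub>R (p3 - p2)
      + (\<epsilon>-3*\<epsilon>^2/4) *\<^sub>R (p4 - p3) + (\<epsilon>^2/4) *\<^sub>R (p5-p4)"
    unfolding q2 q3 q4 by (simp add: vec_eq_iff forall_2 power2_eq_square; simp add: algebra_simps divide_simps)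
  hence "norm (\<epsilon> *\<^sub>R ((1/2) *\<^sub>R (q2 + q4)) + (1 - \<epsilon>) *\<^sub>R q3 - p2) \<le>
     \<bar>-(\<epsilon>^2/4)\<bar> + \<bar>1-\<epsilon>+3*\<epsilon>^2/4\<bar> + \<bar>\<epsilon>-3*\<epsilon>^2/4\<bar> + \<bar>\<epsilon>^2/4\<bar>"
    using norm4[OF d(2-5)] by metis
  moreover have "\<bar>-(\<epsilon>^2/4)\<bar> + \<bar>1-\<epsilon>+3*\<epsilon>^2/4\<bar> + \<bar>\<epsilon>-3*\<epsilon>^2/4\<bar> + \<bar>\<epsilon>^2/4\<bar> = 1 + \<epsilon>^2/2"
  proof -
    have "\<epsilon>^2 \<le> \<epsilon>" using e by (simp add: power2_eq_square mult_left_le_one_le)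
    hence "1-\<epsilon>+3*\<epsilon>^2/4 \<ge> 0" "\<epsilon>-3*\<epsilon>^2/4 \<ge> 0" using e by auto
    thus ?thesis by simp
  qed
  ultimately show "norm (r3 - p2) \<le> 1 + \<epsilon>^2/2" unfolding r3 by linarith
qed
lemma idx_prev: assumes "k \<ge> (1::nat)"
  shows "(nat (z mod int k) + k - 1) mod k = nat ((z - 1) mod int k)"
proof -
  have "int ((nat (z mod int k) + k - 1) mod k) = (z mod int k + int k - 1) mod int k"
    using assms by (simp add: zmod_int of_nat_diff)
  also have "\<dots> = ((z mod int k - 1) + int k) mod int k" by (simp add: algebra_simps)
  also have "\<dots> = (z mod int k - 1) mod int k" by (rule mod_add_self2)
  also have "\<dots> = (z - 1) mod int k" by (rule mod_diff_left_eq)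
  finally show ?thesis by (metis nat_int)
qed

lemma idx_next: assumes "k \<ge> (1::nat)"
  shows "(nat (z mod int k) + 1) mod k = nat ((z + 1) mod int k)"
proof -
  have "int ((nat (z mod int k) + 1) mod k) = (z mod int k + 1) mod int k"
    using assms by (simp add: zmod_int add.commute)
  also have "\<dots> = (z + 1) mod int k" by (rule mod_add_left_eq)
  finally show ?thesis by (metis nat_int)
qed

lemma idx_self: assumes "k \<ge> (1::nat)"
  shows "nat (z mod int k) mod k = nat (z mod int k)"
proof -
  have "0 \<le> z mod int k" "z mod int k < int k" using assms by simp_all
  hence "nat (z mod int k) < k" using nat_less_iff by blast
  thus ?thesis by simp
qed

lemma gtm_int: assumes "k \<ge> (1::nat)"
  shows "gtm_step \<epsilon> k f (nat (z mod int k)) = \<epsilon> *\<^sub>R ((1/2) *\<^sub>R (f (nat ((z-1) mod int k)) + f (nat ((z+1) mod int k)))) + (1-\<epsilon>) *\<^sub>R f (nat (z mod int k))"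
  unfolding gtm_step_def Let_def idx_self[OF assms] idx_prev[OF assms] idx_next[OF assms] ..

lemma hull_bound:
  fixes a :: "real^2"
  assumes "\<forall>x\<in>S. norm (x - a) \<le> M" "p \<in> convex hull S"
  shows "norm (p - a) \<le> M"
proof -
  have "S \<subseteq> cball a M" using assms(1) by (auto simp: mem_cball dist_norm norm_minus_commute)
  hence "convex hull S \<subseteq> cball a M" by (simp add: convex_cball hull_minimal)
  thus ?thesis using assms(2) by (auto simp: mem_cball dist_norm norm_minus_commute)
qed

theorem mainTheorem9:
  fixes k :: nat and \<epsilon> :: real and b :: "nat \<Rightarrow> real^2"
  assumes "k \<ge> 3"
    and "0 \<le> \<epsilon>" and "\<epsilon> < 1/2"
    and "convex_polygon_ccw k b"
    and "\<forall>j<k. norm (b j - b ((j+1) mod k)) \<le> 1"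
  shows "\<forall>j<k. \<forall>p.
     (let b1 = gtm_step \<epsilon> k b; b2 = gtm_step \<epsilon> k b1 in
       p \<in> convex hull {b j, b ((j+1) mod k), b1 ((j+1) mod k), b1 j} \<or>
       p \<in> convex hull {b1 j, b1 ((j+1) mod k), b2 ((j+1) mod k), b2 j})
     \<longrightarrow> norm (p - b j) \<le> 1 + \<epsilon>^2/2 \<and> norm (p - b ((j+1) mod k)) \<le> 1 + \<epsilon>^2/2"
proof (intro allI impI)
  fix j p
  assume j: "j < k"
  have k1: "k \<ge> 1" using assms(1) by simp
  define b1 where "b1 = gtm_step \<epsilon> k b"
  define b2 where "b2 = gtm_step \<epsilon> k b1"
  define c where "c = (\<lambda>w::int. b (nat (w mod int k)))"
  define C1 where "C1 = (\<lambda>w::int. b1 (nat (w mod int k)))"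
  define C2 where "C2 = (\<lambda>w::int. b2 (nat (w mod int k)))"
  have C1e: "C1 w = \<epsilon> *\<^sub>R ((1/2) *\<^sub>R (c (w-1) + c (w+1))) + (1-\<epsilon>) *\<^sub>R c w" for w
    unfolding C1_def c_def b1_def by (rule gtm_int[OF k1])
  have C2e: "C2 w = \<epsilon> *\<^sub>R ((1/2) *\<^sub>R (C1 (w-1) + C1 (w+1))) + (1-\<epsilon>) *\<^sub>R C1 w" for w
    unfolding C1_def C2_def b2_def by (rule gtm_int[OF k1])
  have edge: "norm (c (w+1) - c w) \<le> 1" for w
  proof -
    have lt: "nat (w mod int k) < k" using k1 by (simp add: nat_less_iff)
    have "norm (c w - c (w+1)) \<le> 1"
      using assms(5)[rule_format, OF lt] unfolding c_def idx_next[OF k1] .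
    thus ?thesis by (simp add: norm_minus_commute)
  qed
  have edge': "norm (c (w-1) - c w) \<le> 1" for w
    using edge[of "w-1"] by (simp add: norm_minus_commute)
  define z where "z = int j"
  have nj: "nat (z mod int k) = j" using j unfolding z_def by (simp add: zmod_int)
  have nj1: "nat ((z+1) mod int k) = (j+1) mod k" unfolding z_def
    by (metis nat_int of_nat_Suc Suc_eq_plus1 zmod_int add.commute)
  have bj: "b j = c z" "b ((j+1) mod k) = c (z+1)" unfolding c_def nj nj1 by auto
  have b1j: "b1 j = C1 z" "b1 ((j+1) mod k) = C1 (z+1)" unfolding C1_def nj nj1 by auto
  have b2j: "b2 j = C2 z" "b2 ((j+1) mod k) = C2 (z+1)" unfolding C2_def nj nj1 by auto
  let ?M = "1 + \<epsilon>^2/2"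
  have z2: "z - 2 + 1 = z - 1" "z - 1 + 1 = z" "z + 1 + 1 = z + 2" "z + 2 + 1 = z + 3"
    "z - 2 = z - 1 - 1" "z + 2 - 1 = z + 1" "z + 3 - 1 = z + 2" "z + 1 - 1 = z" by auto
  have E1: "C1 (z-1) = \<epsilon> *\<^sub>R ((1/2) *\<^sub>R (c (z-2) + c z)) + (1-\<epsilon>) *\<^sub>R c (z-1)"
    using C1e[of "z-1"] unfolding z2(2) z2(5)[symmetric] .
  have E2: "C1 (z+2) = \<epsilon> *\<^sub>R ((1/2) *\<^sub>R (c (z+1) + c (z+3))) + (1-\<epsilon>) *\<^sub>R c (z+2)"
    using C1e[of "z+2"] unfolding z2(6) z2(4) .
  have E3: "C1 (z+1) = \<epsilon> *\<^sub>R ((1/2) *\<^sub>R (c z + c (z+2))) + (1-\<epsilon>) *\<^sub>R c (z+1)"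
    using C1e[of "z+1"] unfolding z2(3) z2(8) .
  have E4: "C2 (z+1) = \<epsilon> *\<^sub>R ((1/2) *\<^sub>R (C1 z + C1 (z+2))) + (1-\<epsilon>) *\<^sub>R C1 (z+1)"
    using C2e[of "z+1"] unfolding z2(3) z2(8) .
  have S1: "norm (c (z+1) - c z) \<le> ?M" "norm (C1 z - c z) \<le> ?M" "norm (C1 (z+1) - c z) \<le> ?M"
     "norm (C2 z - c z) \<le> ?M" "norm (C2 (z+1) - c z) \<le> ?M"
  proof -
    note L = sixpts[OF assms(2,3) edge[of "z-2", unfolded z2(1)] edge[of "z-1", unfolded z2(2)] edge[of "z"]
       edge[of "z+1", unfolded z2(3)] edge[of "z+2", unfolded z2(4)] E1 C1e[of z] E3 E2 C2e[of z] E4]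
    show "norm (c (z+1) - c z) \<le> ?M" "norm (C1 z - c z) \<le> ?M" "norm (C1 (z+1) - c z) \<le> ?M"
     "norm (C2 z - c z) \<le> ?M" "norm (C2 (z+1) - c z) \<le> ?M"
      by (fact L)+
  qed
  have S2: "norm (c z - c (z+1)) \<le> ?M" "norm (C1 z - c (z+1)) \<le> ?M" "norm (C1 (z+1) - c (z+1)) \<le> ?M"
     "norm (C2 z - c (z+1)) \<le> ?M" "norm (C2 (z+1) - c (z+1)) \<le> ?M"
  proof -
    have r1: "z+3-1 = z+2" "z+2-1 = z+1" "z+1-1 = z" by auto
    have e1: "C1 (z-1) = \<epsilon> *\<^sub>R ((1/2) *\<^sub>R (c z + c (z-2))) + (1-\<epsilon>) *\<^sub>R c (z-1)"
      unfolding E1 by (simp only: add.commute)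
    have e2: "C1 (z+2) = \<epsilon> *\<^sub>R ((1/2) *\<^sub>R (c (z+3) + c (z+1))) + (1-\<epsilon>) *\<^sub>R c (z+2)"
      unfolding E2 by (simp only: add.commute)
    have e3: "C1 (z+1) = \<epsilon> *\<^sub>R ((1/2) *\<^sub>R (c (z+2) + c z)) + (1-\<epsilon>) *\<^sub>R c (z+1)"
      unfolding E3 by (simp only: add.commute)
    have e5: "C1 z = \<epsilon> *\<^sub>R ((1/2) *\<^sub>R (c (z+1) + c (z-1))) + (1-\<epsilon>) *\<^sub>R c z"
      unfolding C1e[of z] by (simp only: add.commute)
    have e4: "C2 (z+1) = \<epsilon> *\<^sub>R ((1/2) *\<^sub>R (C1 (z+2) + C1 z)) + (1-\<epsilon>) *\<^sub>R C1 (z+1)"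
      unfolding E4 by (simp only: add.commute)
    have e6: "C2 z = \<epsilon> *\<^sub>R ((1/2) *\<^sub>R (C1 (z+1) + C1 (z-1))) + (1-\<epsilon>) *\<^sub>R C1 z"
      unfolding C2e[of z] by (simp only: add.commute)
    show "norm (c z - c (z+1)) \<le> ?M" "norm (C1 z - c (z+1)) \<le> ?M" "norm (C1 (z+1) - c (z+1)) \<le> ?M"
     "norm (C2 z - c (z+1)) \<le> ?M" "norm (C2 (z+1) - c (z+1)) \<le> ?M"
      by (fact sixpts[OF assms(2,3) edge'[of "z+3", unfolded r1(1)] edge'[of "z+2", unfolded r1(2)]
         edge'[of "z+1", unfolded r1(3)] edge'[of "z"] edge'[of "z-1", unfolded z2(5)[symmetric]] e2 e3 e5 e1 e4 e6])+
  qed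
  assume "let b1 = gtm_step \<epsilon> k b; b2 = gtm_step \<epsilon> k b1 in
       p \<in> convex hull {b j, b ((j+1) mod k), b1 ((j+1) mod k), b1 j} \<or>
       p \<in> convex hull {b1 j, b1 ((j+1) mod k), b2 ((j+1) mod k), b2 j}"
  hence hp: "p \<in> convex hull {c z, c (z+1), C1 (z+1), C1 z} \<or>
       p \<in> convex hull {C1 z, C1 (z+1), C2 (z+1), C2 z}"
    unfolding Let_def b1_def[symmetric] b2_def[symmetric] bj b1j b2j .
  have M1: "1 \<le> ?M" "0 \<le> ?M" by simp_all
  have "norm (p - c z) \<le> ?M \<and> norm (p - c (z+1)) \<le> ?M"
    using hp
  proof
    assume h: "p \<in> convex hull {c z, c (z+1), C1 (z+1), C1 z}"
    show ?thesis
    proof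
      show "norm (p - c z) \<le> ?M" by (rule hull_bound[OF _ h]) (use S1 M1 in auto)
      show "norm (p - c (z+1)) \<le> ?M" by (rule hull_bound[OF _ h]) (use S2 M1 in auto)
    qed
  next
    assume h: "p \<in> convex hull {C1 z, C1 (z+1), C2 (z+1), C2 z}"
    show ?thesis
    proof
      show "norm (p - c z) \<le> ?M" by (rule hull_bound[OF _ h]) (use S1 M1 in auto)
      show "norm (p - c (z+1)) \<le> ?M" by (rule hull_bound[OF _ h]) (use S2 M1 in auto)
    qed
  qed
  thus "norm (p - b j) \<le> ?M \<and> norm (p - b ((j+1) mod k)) \<le> ?M" unfolding bj .
qed

end
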